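(* Let $(\gamma_\nu)_{\nu\ge 0}$ be complex numbers, let $f(z)=\sum_{\nu=0}^{\infty}\gamma_\nu z^\nu$ be the corresponding formal power series, and let $f_n(z)=\sum_{\nu=0}^{n}\gamma_\nu z^\nu$. Work in the field $\mathbb{C}((z))$ of formal Laurent series. Define numbers $\mathcal{C}_k^{(n)}$ by $\mathcal{C}_0^{(n)}=-\gamma_{n+1}$ and $\mathcal{C}_{k+1}^{(n)}=\mathcal{C}_k^{(n+3)}-\dfrac{\mathcal{C}_k^{(n+2)}\bigl\{2\mathcal{C}_k^{(n)}\mathcal{C}_k^{(n+2)}-[\mathcal{C}_k^{(n+1)}]^2\bigr\}}{\mathcal{C}_k^{(n)}\mathcal{C}_k^{(n+1)}}$ for $k,n\in\mathbb{N}_0$, and assume $\mathcal{C}_k^{(n)}\neq0$ for all $k,n\in\mathbb{N}_0$. Let $\mathcal{J}_k^{(n)}$ be the iterated theta algorithm applied to $s_n=f_n(z)$: $\mathcal{J}_0^{(n)}=f_n(z)$, $\mathcal{J}_{k+1}^{(n)}=\mathcal{J}_k^{(n+1)}-\dfrac{[\Delta\mathcal{J}_k^{(n)}][\Delta\mathcal{J}_k^{(n+1)}][\Delta^2\mathcal{J}_k^{(n+1)}]}{[\Delta\mathcal{J}_k^{(n+2)}][\Delta^2\mathcal{J}_k^{(n)}]-[\Delta\mathcal{J}_k^{(n)}][\Delta^2\mathcal{J}_k^{(n+1)}]}$, where $\Delta$ acts on the superscript, $\Delta\mathcal{J}_k^{(n)}=\mathcal{J}_k^{(n+1)}-\mathcal{J}_k^{(n)}$.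 Then all $\mathcal{J}_k^{(n)}$ are well defined elements of $\mathbb{C}[[z]]$, and for all $k,n\in\mathbb{N}_0$: (i) $\mathcal{J}_k^{(n)}=f(z)+z^{n+3k+1}\mathcal{R}_k^{(n)}(z)$ with $\mathcal{R}_k^{(n)}(z)\in\mathbb{C}[[z]]$ having constant term $\mathcal{C}_k^{(n)}$; in particular $f(z)-\mathcal{J}_k^{(n)}=O(z^{n+3k+1})$; (ii) $\mathcal{J}_k^{(n)}=f_{n+3k}(z)+\mathcal{G}_k^{(n)}z^{n+3k+1}+O(z^{n+3k+2})$, where $\mathcal{G}_k^{(n)}=\mathcal{C}_k^{(n)}+\gamma_{n+3k+1}$ and $\mathcal{G}_0^{(n)}=0$, $\mathcal{G}_1^{(n)}=-\gamma_{n+3}\bigl\{\gamma_{n+2}^2-2\gamma_{n+1}\gamma_{n+3}\bigr\}/(\gamma_{n+1}\gamma_{n+2})$, and $\mathcal{G}_{k+1}^{(n)}=\mathcal{G}_k^{(n+3)}-F_{k+1}^{(n)}/H_{k+1}^{(n)}$ with $F_{k+1}^{(n)}=\bigl[\gamma_{n+3k+3}-\mathcal{G}_k^{(n+2)}\bigr]\Bigl\{\bigl[\gamma_{n+3k+2}-\mathcal{G}_k^{(n+1)}\bigr]^2-2\bigl[\gamma_{n+3k+1}-\mathcal{G}_k^{(n)}\bigr]\bigl[\gamma_{n+3k+3}-\mathcal{G}_k^{(n+2)}\bigr]\Bigr\}$ and $H_{k+1}^{(n)}=\bigl[\gamma_{n+3k+1}-\mathcal{G}_k^{(n)}\bigr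]\bigl[\gamma_{n+3k+2}-\mathcal{G}_k^{(n+1)}\bigr]$.
   Context: $\mathbb{N}_0=\{0,1,2,\dots\}$. $O(z^m)$ denotes an element of $z^m\mathbb{C}[[z]]$. The number $\mathcal{G}_k^{(n)}$ is interpreted as the prediction for the coefficient $\gamma_{n+3k+1}$, the first coefficient not used in computing $\mathcal{J}_k^{(n)}$ (which uses $f_n,\dots,f_{n+3k}$). *)

theory Defs
  imports Complex_Main "HOL-Computational_Algebra.Formal_Laurent_Series"
begin

definition fser :: "(nat \<Rightarrow> complex) \<Rightarrow> complex fps" where
  "fser \<gamma> = Abs_fps \<gamma>"

definition fpart :: "(nat \<Rightarrow> complex) \<Rightarrow> nat \<Rightarrow> complex fps" where
  "fpart \<gamma> n = Abs_fps (\<lambda>\<nu>. if \<nu> \<le> n then \<gamma> \<nu> else 0)"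

fun Cc :: "(nat \<Rightarrow> complex) \<Rightarrow> nat \<Rightarrow> nat \<Rightarrow> complex" where
  "Cc \<gamma> 0 n = - \<gamma> (n + 1)"
| "Cc \<gamma> (Suc k) n = Cc \<gamma> k (n + 3)
     - Cc \<gamma> k (n + 2) * (2 * Cc \<gamma> k n * Cc \<gamma> k (n + 2) - (Cc \<gamma> k (n + 1))\<^sup>2)
       / (Cc \<gamma> k n * Cc \<gamma> k (n + 1))"

definition Gc :: "(nat \<Rightarrow> complex) \<Rightarrow> nat \<Rightarrow> nat \<Rightarrow> complex" where
  "Gc \<gamma> k n = Cc \<gamma> k n + \<gamma> (n + 3 * k + 1)"

definition fwd_diff :: "(nat \<Rightarrow> complex fls) \<Rightarrow> nat \<Rightarrow> complex fls" where
  "fwd_diff s n = s (n + 1) - s n"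

definition fwd_diff2 :: "(nat \<Rightarrow> complex fls) \<Rightarrow> nat \<Rightarrow> complex fls" where
  "fwd_diff2 s n = fwd_diff (fwd_diff s) n"

definition theta_den :: "(nat \<Rightarrow> complex fls) \<Rightarrow> nat \<Rightarrow> complex fls" where
  "theta_den s n = fwd_diff s (n + 2) * fwd_diff2 s n - fwd_diff s n * fwd_diff2 s (n + 1)"

definition theta_step :: "(nat \<Rightarrow> complex fls) \<Rightarrow> nat \<Rightarrow> complex fls" where
  "theta_step s n = s (n + 1)
     - fwd_diff s n * fwd_diff s (n + 1) * fwd_diff2 s (n + 1) / theta_den s n"

fun Jt :: "(nat \<Rightarrow> complex) \<Rightarrow> nat \<Rightarrow> nat \<Rightarrow> complex fls" where
  "Jt \<gamma> 0 n = fps_to_fls (fpart \<gamma> n)"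
| "Jt \<gamma> (Suc k) n = theta_step (Jt \<gamma> k) n"

end

theory Submission
  imports Defs
begin

lemma alg:
  fixes F w z r0 r1 r2 r3 :: "'a::field"
  defines "A \<equiv> z*r1 - r0" and "B \<equiv> z*r2 - r1" and "Cq \<equiv> z*r3 - r2"
  defines "D \<equiv> A*B - 2*z*A*Cq + z^2*B*Cq"
  defines "Nm \<equiv> 2*A*(r2^2 - r1*r3) + B*(r1*Cq - A*r3)"
  assumes s0: "s0 = F + w*r0" and s1: "s1 = F + w*z*r1" and s2: "s2 = F + w*z^2*r2"
    and s3: "s3 = F + w*z^3*r3"
  shows "(s3 - s2)*((s2-s1)-(s1-s0)) - (s1-s0)*((s3-s2)-(s2-s1)) = w^2*z*D"
    and "w \<noteq> 0 \<Longrightarrow> z \<noteq> 0 \<Longrightarrow> D \<noteq> 0 \<Longrightarrow>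
      s1 - (s1-s0)*(s2-s1)*((s3-s2)-(s2-s1)) / ((s3 - s2)*((s2-s1)-(s1-s0)) - (s1-s0)*((s3-s2)-(s2-s1)))
       = F + w*z^3*(Nm/D)"
proof -
  show 1: "(s3 - s2)*((s2-s1)-(s1-s0)) - (s1-s0)*((s3-s2)-(s2-s1)) = w^2*z*D"
    unfolding s0 s1 s2 s3 D_def A_def B_def Cq_def by (simp add: algebra_simps power2_eq_square power3_eq_cube)
  assume nz: "w \<noteq> 0" "z \<noteq> 0" "D \<noteq> 0"
  have "(s1-s0)*(s2-s1)*((s3-s2)-(s2-s1)) = w^3*z^2*(A*B*(z*Cq - B))"
    unfolding s0 s1 s2 s3 A_def B_def Cq_def by (simp add: algebra_simps power2_eq_square power3_eq_cube)
  moreover have "r1*D - A*B*(z*Cq - B) = z^2*Nm"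
    unfolding Nm_def D_def A_def B_def Cq_def by (simp add: algebra_simps power2_eq_square power3_eq_cube)
  ultimately have e0: "(s1-s0)*(s2-s1)*((s3-s2)-(s2-s1)) / ((s3 - s2)*((s2-s1)-(s1-s0)) - (s1-s0)*((s3-s2)-(s2-s1)))
      = (w^3*z^2*(A*B*(z*Cq - B))) / (w^2*z*D)" and h: "A*B*(z*Cq - B) = r1*D - z^2*Nm" unfolding 1 by (simp, metis add_diff_cancel_left add_diff_eq diff_add_cancel)
  have "(w^3*z^2*(A*B*(z*Cq - B))) / (w^2*z*D) = w*z*(r1 - z^2*Nm/D)"
    unfolding h using nz by (simp add: field_simps power2_eq_square power3_eq_cube)
  note e = e0[unfolded this]
  show "s1 - (s1-s0)*(s2-s1)*((s3-s2)-(s2-s1)) / ((s3 - s2)*((s2-s1)-(s1-s0)) - (s1-s0)*((s3-s2)-(s2-s1)))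
       = F + w*z^3*(Nm/D)" unfolding e unfolding s1 by (simp add: algebra_simps power2_eq_square power3_eq_cube)
qed

lemma fser_split: "fser \<gamma> = fpart \<gamma> m + fps_X ^ (m+1) * Abs_fps (\<lambda>i. \<gamma> (m+1+i))"
  by (rule fps_ext) (simp only: fps_add_nth fps_X_power_mult_nth, auto simp: fser_def fpart_def)

lemma base: "\<exists>R. Jt \<gamma> 0 n = fps_to_fls (fser \<gamma> + fps_X ^ (n + 3 * 0 + 1) * R) \<and> R $ 0 = Cc \<gamma> 0 n"
  by (rule exI[of _ "- Abs_fps (\<lambda>i. \<gamma> (n+1+i))"]) (simp add: fser_split[of \<gamma> n])

lemma step:
  fixes \<gamma> :: "nat \<Rightarrow> complex"
  assumes nz: "\<And>k n. Cc \<gamma> k n \<noteq> 0"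
  assumes IH: "\<And>n. \<exists>R. Jt \<gamma> k n = fps_to_fls (fser \<gamma> + fps_X ^ (n + 3 * k + 1) * R) \<and> R $ 0 = Cc \<gamma> k n"
  shows "theta_den (Jt \<gamma> k) n \<noteq> 0 \<and>
     (\<exists>R. Jt \<gamma> (Suc k) n = fps_to_fls (fser \<gamma> + fps_X ^ (n + 3 * Suc k + 1) * R) \<and> R $ 0 = Cc \<gamma> (Suc k) n)"
proof -
  obtain R0 where R0: "Jt \<gamma> k n = fps_to_fls (fser \<gamma> + fps_X ^ (n + 3 * k + 1) * R0)" "R0 $ 0 = Cc \<gamma> k n"
    using IH[of n] by blast
  obtain R1 where R1: "Jt \<gamma> k (n+1) = fps_to_fls (fser \<gamma> + fps_X ^ (n + 1 + 3 * k + 1) * R1)" "R1 $ 0 = Cc \<gamma> k (n+1)"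
    using IH[of "n+1"] by blast
  obtain R2 where R2: "Jt \<gamma> k (n+2) = fps_to_fls (fser \<gamma> + fps_X ^ (n + 2 + 3 * k + 1) * R2)" "R2 $ 0 = Cc \<gamma> k (n+2)"
    using IH[of "n+2"] by blast
  obtain R3 where R3: "Jt \<gamma> k (n+3) = fps_to_fls (fser \<gamma> + fps_X ^ (n + 3 + 3 * k + 1) * R3)" "R3 $ 0 = Cc \<gamma> k (n+3)"
    using IH[of "n+3"] by blast
  define F where "F = fps_to_fls (fser \<gamma>)"
  define w :: "complex fls" where "w = fls_X ^ (n + 3 * k + 1)"
  define z :: "complex fls" where "z = fls_X"
  define r0 where "r0 = fps_to_fls R0"
  define r1 where "r1 = fps_to_fls R1"
  define r2 where "r2 = fps_to_fls R2"
  define r3 where "r3 = fps_to_fls R3"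
  define s0 where "s0 = Jt \<gamma> k n"
  define s1 where "s1 = Jt \<gamma> k (n+1)"
  define s2 where "s2 = Jt \<gamma> k (n+2)"
  define s3 where "s3 = Jt \<gamma> k (n+3)"
  have e0: "s0 = F + w*r0" unfolding s0_def R0(1) F_def w_def r0_def
    by (simp add: fls_times_fps_to_fls fps_to_fls_power)
  have e1: "s1 = F + w*z*r1" unfolding s1_def R1(1) F_def w_def r1_def z_def
    by (simp add: fls_times_fps_to_fls fps_to_fls_power power_add mult_ac)
  have e2: "s2 = F + w*z^2*r2" unfolding s2_def R2(1) F_def w_def r2_def z_def
    by (simp add: fls_times_fps_to_fls fps_to_fls_power power_add mult_ac power2_eq_square)
  have e3: "s3 = F + w*z^3*r3" unfolding s3_def R3(1) F_def w_def r3_def z_def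
    by (simp add: fls_times_fps_to_fls fps_to_fls_power power_add mult_ac eval_nat_numeral)
  define Ap where "Ap = fps_X*R1 - R0"
  define Bp where "Bp = fps_X*R2 - R1"
  define Cp where "Cp = fps_X*R3 - R2"
  define Dp where "Dp = Ap*Bp - 2*fps_X*Ap*Cp + fps_X^2*Bp*Cp"
  define Np where "Np = 2*Ap*(R2^2 - R1*R3) + Bp*(R1*Cp - Ap*R3)"
  have D: "fps_to_fls Dp = (z*r1 - r0)*(z*r2 - r1) - 2*z*(z*r1 - r0)*(z*r3 - r2) + z^2*(z*r2 - r1)*(z*r3 - r2)"
    unfolding Dp_def Ap_def Bp_def Cp_def z_def r0_def r1_def r2_def r3_def
    by (simp add: fls_times_fps_to_fls fps_to_fls_power)
  have N: "fps_to_fls Np = 2*(z*r1 - r0)*(r2^2 - r1*r3) + (z*r2 - r1)*(r1*(z*r3 - r2) - (z*r1 - r0)*r3)"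
    unfolding Np_def Ap_def Bp_def Cp_def z_def r0_def r1_def r2_def r3_def
    by (simp add: fls_times_fps_to_fls fps_to_fls_power)
  have D0: "Dp $ 0 = Cc \<gamma> k n * Cc \<gamma> k (n+1)"
    unfolding Dp_def Ap_def Bp_def Cp_def using R0(2) R1(2) by (simp add: power2_eq_square)
  have N0: "Np $ 0 = - 2 * Cc \<gamma> k n * (Cc \<gamma> k (n+2))^2 + Cc \<gamma> k n * Cc \<gamma> k (n+1) * Cc \<gamma> k (n+3)
      + (Cc \<gamma> k (n+1))^2 * Cc \<gamma> k (n+2)"
    unfolding Np_def Ap_def Bp_def Cp_def using R0(2) R1(2) R2(2) R3(2)
    by (simp add: power2_eq_square algebra_simps)
  have Dnz: "Dp $ 0 \<noteq> 0" using D0 nz by simp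
  hence Dfnz: "fps_to_fls Dp \<noteq> 0" by (auto simp: fps_to_fls_eq_0_iff)
  have wnz: "w \<noteq> 0" "z \<noteq> 0" unfolding w_def z_def by simp_all
  note A = alg[of s0 F w r0 s1 z r1 s2 r2 s3 r3, OF e0 e1 e2 e3, folded D N]
  have den: "theta_den (Jt \<gamma> k) n = (s3 - s2)*((s2-s1)-(s1-s0)) - (s1-s0)*((s3-s2)-(s2-s1))"
    unfolding theta_den_def fwd_diff2_def fwd_diff_def s0_def s1_def s2_def s3_def
    by (simp add: add.assoc eval_nat_numeral)
  have th: "Jt \<gamma> (Suc k) n = s1 - (s1-s0)*(s2-s1)*((s3-s2)-(s2-s1)) / ((s3 - s2)*((s2-s1)-(s1-s0)) - (s1-s0)*((s3-s2)-(s2-s1)))"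
    unfolding Jt.simps theta_step_def den[symmetric] unfolding fwd_diff2_def fwd_diff_def s0_def s1_def s2_def s3_def
    by (simp add: add.assoc eval_nat_numeral)
  have q: "fps_to_fls Np / fps_to_fls Dp = fps_to_fls (Np * inverse Dp)"
    using Dnz by (simp add: divide_inverse fls_times_fps_to_fls fls_inverse_fps_to_fls)
  show ?thesis
  proof
    show "theta_den (Jt \<gamma> k) n \<noteq> 0" unfolding den A(1) using wnz Dfnz by simp
    show "\<exists>R. Jt \<gamma> (Suc k) n = fps_to_fls (fser \<gamma> + fps_X ^ (n + 3 * Suc k + 1) * R) \<and> R $ 0 = Cc \<gamma> (Suc k) n"
    proof (intro exI conjI)
      show "Jt \<gamma> (Suc k) n = fps_to_fls (fser \<gamma> + fps_X ^ (n + 3 * Suc k + 1) * (Np * inverse Dp))"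
        unfolding th A(2)[OF wnz Dfnz] q unfolding F_def w_def z_def
        by (simp add: fls_times_fps_to_fls fps_to_fls_power power_add mult_ac eval_nat_numeral)
      show "(Np * inverse Dp) $ 0 = Cc \<gamma> (Suc k) n"
        using nz[of k n] nz[of k "n+1"] unfolding fps_mult_nth_0 fps_inverse_nth_0 N0 D0
        by (simp add: field_simps power2_eq_square)
    qed
  qed
qed

lemma main_ind:
  fixes \<gamma> :: "nat \<Rightarrow> complex"
  assumes nz: "\<And>k n. Cc \<gamma> k n \<noteq> 0"
  shows "\<exists>R. Jt \<gamma> k n = fps_to_fls (fser \<gamma> + fps_X ^ (n + 3 * k + 1) * R) \<and> R $ 0 = Cc \<gamma> k n"
proof (induction k arbitrary: n)
  case 0 show ?case by (rule base)
next
  case (Suc k) show ?case using step[OF nz Suc] by blast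
qed

lemma part3:
  assumes "Jt \<gamma> k n = fps_to_fls (fser \<gamma> + fps_X ^ (n + 3 * k + 1) * R)" "R $ 0 = Cc \<gamma> k n"
  shows "\<exists>E :: complex fps.
          Jt \<gamma> k n = fps_to_fls (fpart \<gamma> (n + 3 * k)
             + fps_const (Gc \<gamma> k n) * fps_X ^ (n + 3 * k + 1)
             + fps_X ^ (n + 3 * k + 2) * E)"
proof (intro exI)
  let ?m = "n + 3 * k"
  show "Jt \<gamma> k n = fps_to_fls (fpart \<gamma> ?m + fps_const (Gc \<gamma> k n) * fps_X ^ (?m + 1)
             + fps_X ^ (?m + 2) * Abs_fps (\<lambda>i. \<gamma> (?m+2+i) + R $ (i+1)))"
    unfolding assms(1) fps_to_fls_eq_iff
  proof (rule fps_ext)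
    fix i
    show "(fser \<gamma> + fps_X ^ (?m + 1) * R) $ i = (fpart \<gamma> ?m + fps_const (Gc \<gamma> k n) * fps_X ^ (?m + 1)
             + fps_X ^ (?m + 2) * Abs_fps (\<lambda>i. \<gamma> (?m+2+i) + R $ (i+1))) $ i"
      using assms(2)
      apply (simp only: fps_add_nth fps_X_power_mult_nth fps_mult_left_const_nth fps_X_power_nth)
      apply (auto simp: fser_def fpart_def Gc_def)
       apply (subgoal_tac "i = Suc (n+3*k)", simp, linarith)
      apply (subgoal_tac "i - Suc (n+3*k) = Suc (i - Suc (Suc (n+3*k)))" "Suc (Suc (i-2)) = i", simp, linarith, linarith)
      done
  qed
qed

theorem mainTheorem2:
  fixes \<gamma> :: "nat \<Rightarrow> complex"
  assumes nz: "\<And>k n. Cc \<gamma> k n \<noteq> 0"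
  shows "(\<forall>k n. theta_den (Jt \<gamma> k) n \<noteq> 0)
    \<and> (\<forall>k n. \<exists>R :: complex fps.
          Jt \<gamma> k n = fps_to_fls (fser \<gamma> + fps_X ^ (n + 3 * k + 1) * R)
          \<and> fps_nth R 0 = Cc \<gamma> k n)
    \<and> (\<forall>k n. \<exists>E :: complex fps.
          Jt \<gamma> k n = fps_to_fls (fpart \<gamma> (n + 3 * k)
             + fps_const (Gc \<gamma> k n) * fps_X ^ (n + 3 * k + 1)
             + fps_X ^ (n + 3 * k + 2) * E))
    \<and> (\<forall>n. Gc \<gamma> 0 n = 0)
    \<and> (\<forall>n. Gc \<gamma> 1 n = - \<gamma> (n + 3) * ((\<gamma> (n + 2))\<^sup>2 - 2 * \<gamma> (n + 1) * \<gamma> (n + 3))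
                         / (\<gamma> (n + 1) * \<gamma> (n + 2)))
    \<and> (\<forall>k n. Gc \<gamma> (Suc k) n = Gc \<gamma> k (n + 3)
          - ((\<gamma> (n + 3 * k + 3) - Gc \<gamma> k (n + 2))
              * ((\<gamma> (n + 3 * k + 2) - Gc \<gamma> k (n + 1))\<^sup>2
                 - 2 * (\<gamma> (n + 3 * k + 1) - Gc \<gamma> k n) * (\<gamma> (n + 3 * k + 3) - Gc \<gamma> k (n + 2))))
            / ((\<gamma> (n + 3 * k + 1) - Gc \<gamma> k n) * (\<gamma> (n + 3 * k + 2) - Gc \<gamma> k (n + 1))))"
proof -
  have P2: "\<forall>k n. \<exists>R :: complex fps.
          Jt \<gamma> k n = fps_to_fls (fser \<gamma> + fps_X ^ (n + 3 * k + 1) * R)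
          \<and> fps_nth R 0 = Cc \<gamma> k n" using main_ind[OF nz] by blast
  have P1: "\<forall>k n. theta_den (Jt \<gamma> k) n \<noteq> 0"
    using step[OF nz main_ind[OF nz]] by blast
  have P3: "\<forall>k n. \<exists>E :: complex fps.
          Jt \<gamma> k n = fps_to_fls (fpart \<gamma> (n + 3 * k)
             + fps_const (Gc \<gamma> k n) * fps_X ^ (n + 3 * k + 1)
             + fps_X ^ (n + 3 * k + 2) * E)"
    using P2 part3 by metis
  have P5: "\<forall>n. Gc \<gamma> 1 n = - \<gamma> (n + 3) * ((\<gamma> (n + 2))\<^sup>2 - 2 * \<gamma> (n + 1) * \<gamma> (n + 3))
                         / (\<gamma> (n + 1) * \<gamma> (n + 2))"
  proof
    fix n
    have "\<gamma> (n+1) \<noteq> 0" "\<gamma> (n+2) \<noteq> 0" using nz[of 0 n] nz[of 0 "n+1"] by simp_all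
    then show "Gc \<gamma> 1 n = - \<gamma> (n + 3) * ((\<gamma> (n + 2))\<^sup>2 - 2 * \<gamma> (n + 1) * \<gamma> (n + 3))
                         / (\<gamma> (n + 1) * \<gamma> (n + 2))"
      by (simp add: Gc_def field_simps power2_eq_square numeral_eq_Suc)
  qed
  have P6: "\<forall>k n. Gc \<gamma> (Suc k) n = Gc \<gamma> k (n + 3)
          - ((\<gamma> (n + 3 * k + 3) - Gc \<gamma> k (n + 2))
              * ((\<gamma> (n + 3 * k + 2) - Gc \<gamma> k (n + 1))\<^sup>2
                 - 2 * (\<gamma> (n + 3 * k + 1) - Gc \<gamma> k n) * (\<gamma> (n + 3 * k + 3) - Gc \<gamma> k (n + 2))))
            / ((\<gamma> (n + 3 * k + 1) - Gc \<gamma> k n) * (\<gamma> (n + 3 * k + 2) - Gc \<gamma> k (n + 1)))"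
  proof (intro allI)
    fix k n
    have a: "\<gamma> (n + 3 * k + 1) - Gc \<gamma> k n = - Cc \<gamma> k n"
      "\<gamma> (n + 3 * k + 2) - Gc \<gamma> k (n+1) = - Cc \<gamma> k (n+1)"
      "\<gamma> (n + 3 * k + 3) - Gc \<gamma> k (n+2) = - Cc \<gamma> k (n+2)"
      "Gc \<gamma> (Suc k) n = Cc \<gamma> (Suc k) n + \<gamma> (n + 3 * k + 4)"
      "Gc \<gamma> k (n+3) = Cc \<gamma> k (n+3) + \<gamma> (n + 3 * k + 4)"
      by (simp_all add: Gc_def algebra_simps eval_nat_numeral)
    show "Gc \<gamma> (Suc k) n = Gc \<gamma> k (n + 3)
          - ((\<gamma> (n + 3 * k + 3) - Gc \<gamma> k (n + 2))
              * ((\<gamma> (n + 3 * k + 2) - Gc \<gamma> k (n + 1))\<^sup>2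
                 - 2 * (\<gamma> (n + 3 * k + 1) - Gc \<gamma> k n) * (\<gamma> (n + 3 * k + 3) - Gc \<gamma> k (n + 2))))
            / ((\<gamma> (n + 3 * k + 1) - Gc \<gamma> k n) * (\<gamma> (n + 3 * k + 2) - Gc \<gamma> k (n + 1)))"
      unfolding a by (simp add: power2_eq_square algebra_simps)
  qed
  show ?thesis using P1 P2 P3 P5 P6 by (simp add: Gc_def)
qed

end
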